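(* A Poisson bracket $\{\cdot,\cdot\}$ on $\widetilde J$ is admissible if and only if its values on the generators are $\{E_4,E_6\}=-2E_4^3+2E_6^2$, $\{A,E_4\}=\alpha E_6A+\gamma E_4B$, $\{A,E_6\}=\beta E_4^2A+\delta E_6B$, $\{B,E_4\}=\lambda E_4^2A+\varepsilon E_6B$, $\{B,E_6\}=\mu E_4E_6A+\theta E_4^2B$, $\{A,B\}=\xi E_4A^2+\eta B^2$, where the complex parameters $(\alpha,\beta,\gamma,\delta,\lambda,\mu,\theta,\varepsilon,\xi,\eta)$ belong to one of the following families (unlisted parameters free): (A) $\gamma\ne0$, $\varepsilon$ arbitrary, $\alpha=\varepsilon$, $\beta=\frac32\varepsilon+1$, $\delta=\gamma$, $\lambda=\frac4\gamma$, $\mu=\frac8\gamma$, $\theta=\frac32\varepsilon-1$, $\xi=\frac{4\varepsilon}\gamma$, $\eta=(-\frac34\varepsilon+\frac12)\gamma$; (B) $\gamma,\lambda,\varepsilon$ arbitrary, $\alpha=\varepsilon+\frac23$, $\beta=\frac32\varepsilon+1$, $\delta=\frac32\gamma$, $\mu=\frac32\lambda$, $\theta=\frac32\varepsilon$, $\xi=(\frac34\varepsilon+\frac12)\lambda$, $\eta=-\frac34\varepsilon\gamma$; (C1) $\alpha=4$, $\beta=6$, $\gamma\ne0$, $\delta=-\gamma$, $\lambda=\mu=\theta=\varepsilon=\xi=\eta=0$; (C2) $\alpha=\beta=\gamma=\delta=0$, $\lambda\ne0$, $\mu=-2\lambda$, $\theta=6$, $\varepsilon=4$, $\xi=\eta=0$;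 (D) $\varepsilon,\eta$ arbitrary, $\alpha=\varepsilon$, $\beta=\frac32\varepsilon$, $\gamma=\delta=\lambda=\mu=0$, $\theta=\frac32\varepsilon$, $\xi=0$; (E) $\varepsilon$ arbitrary, $\alpha\ne\varepsilon+\frac23$, $\beta=\frac32\alpha$, $\gamma=\delta=\lambda=\mu=0$, $\theta=\frac32\varepsilon$, $\xi=\eta=0$.
   Context: Let $\widetilde J=\mathbb{C}[E_4,E_6,A,B]$ be the polynomial algebra in four algebraically independent variables, bigraded by weight and index, where $E_4$ has weight $4$ and index $0$, $E_6$ has weight $6$ and index $0$, $A$ has weight $-2$ and index $1$, $B$ has weight $0$ and index $1$; $\widetilde J_{k,p}$ denotes the homogeneous component of weight $k$ and index $p$ (the algebra of weak Jacobi forms of even weight). $\mathcal M_*=\mathbb{C}[E_4,E_6]$ with weight-$k$ part $\mathcal M_k$. The Serre derivation $S$ of $\mathcal M_*$ has $S(E_4)=-\frac13E_6$, $S(E_6)=-\frac12E_4^2$, and the first Rankin–Cohen bracket on $\mathcal M_*$ is $\mathrm{RC}_1(f,g)=kfS(g)-\ell gS(f)$ for $f\in\mathcal M_k$, $g\in\mathcal M_\ell$ (equivalently $kfDg-\ell gDf$ with $D=q\,d/dq$). A Poisson bracket on $\widetilde J$ (a skew-symmetric biderivation satisfying the Jacobi identity) is admissible if (1) $\{f,g\}=\mathrm{RC}_1(f,g)$ for all $f,g\in\mathcal M_*$ and (2) $\{\widetilde J_{k,p},\widetilde J_{\ell,q}\}\subset\widetilde J_{k+\ell+2,p+q}$ for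 all weights $k,\ell$ and indices $p,q$. *)

theory Defs
  imports Complex_Main "HOL-Library.Poly_Mapping"
begin

text \<open>Polynomials in the variables X 0 = E4, X 1 = E6, X 2 = A, X 3 = B with complex
coefficients, as finitely supported maps from exponent vectors (monomials) to coefficients.\<close>

type_synonym mono = "nat \<Rightarrow>\<^sub>0 nat"
type_synonym jpoly = "mono \<Rightarrow>\<^sub>0 complex"

definition Var :: "nat \<Rightarrow> jpoly" where
  "Var i = Poly_Mapping.single (Poly_Mapping.single i 1) 1"

definition Cst :: "complex \<Rightarrow> jpoly" where
  "Cst c = Poly_Mapping.single 0 c"

abbreviation E4 :: jpoly where "E4 \<equiv> Var 0"
abbreviation E6 :: jpoly where "E6 \<equiv> Var 1"
abbreviation JA :: jpoly where "JA \<equiv> Var 2"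
abbreviation JB :: jpoly where "JB \<equiv> Var 3"

definition in_Jt :: "jpoly \<Rightarrow> bool" where
  "in_Jt p \<longleftrightarrow> (\<forall>m\<in>Poly_Mapping.keys p. Poly_Mapping.keys m \<subseteq> {0,1,2,3})"

definition mweight :: "mono \<Rightarrow> int" where
  "mweight m = 4 * int (Poly_Mapping.lookup m 0) + 6 * int (Poly_Mapping.lookup m 1) - 2 * int (Poly_Mapping.lookup m 2)"

definition mindex :: "mono \<Rightarrow> nat" where
  "mindex m = Poly_Mapping.lookup m 2 + Poly_Mapping.lookup m 3"

definition Jt :: "int \<Rightarrow> nat \<Rightarrow> jpoly set" where
  "Jt k p = {f. \<forall>m\<in>Poly_Mapping.keys f. Poly_Mapping.keys m \<subseteq> {0,1,2,3} \<and> mweight m = k \<and> mindex m = p}"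

definition Mk :: "int \<Rightarrow> jpoly set" where
  "Mk k = {f. \<forall>m\<in>Poly_Mapping.keys f. Poly_Mapping.keys m \<subseteq> {0,1} \<and> mweight m = k}"

definition Mstar :: "jpoly set" where
  "Mstar = {f. \<forall>m\<in>Poly_Mapping.keys f. Poly_Mapping.keys m \<subseteq> {0,1}}"

definition pderiv_var :: "nat \<Rightarrow> jpoly \<Rightarrow> jpoly" where
  "pderiv_var i p = (\<Sum>m\<in>Poly_Mapping.keys p.
      Poly_Mapping.single (m - Poly_Mapping.single i 1) (of_nat (Poly_Mapping.lookup m i) * Poly_Mapping.lookup p m))"

definition serre :: "jpoly \<Rightarrow> jpoly" where
  "serre f = pderiv_var 0 f * Cst (-1/3) * E6 + pderiv_var 1 f * Cst (-1/2) * E4 ^ 2"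

definition RC1 :: "int \<Rightarrow> int \<Rightarrow> jpoly \<Rightarrow> jpoly \<Rightarrow> jpoly" where
  "RC1 k l f g = of_int k * f * serre g - of_int l * g * serre f"

definition poisson_bracket :: "(jpoly \<Rightarrow> jpoly \<Rightarrow> jpoly) \<Rightarrow> bool" where
  "poisson_bracket br \<longleftrightarrow>
     (\<forall>f g. in_Jt f \<longrightarrow> in_Jt g \<longrightarrow> in_Jt (br f g)) \<and>
     (\<forall>f g. in_Jt f \<longrightarrow> in_Jt g \<longrightarrow> br f g = - br g f) \<and>
     (\<forall>f g h. in_Jt f \<longrightarrow> in_Jt g \<longrightarrow> in_Jt h \<longrightarrow> br (f + g) h = br f h + br g h) \<and>
     (\<forall>f g h. in_Jt f \<longrightarrow> in_Jt g \<longrightarrow> in_Jt h \<longrightarrow> br h (f + g) = br h f + br h g) \<and>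
     (\<forall>c f h. in_Jt f \<longrightarrow> in_Jt h \<longrightarrow> br (Cst c * f) h = Cst c * br f h) \<and>
     (\<forall>c f h. in_Jt f \<longrightarrow> in_Jt h \<longrightarrow> br h (Cst c * f) = Cst c * br h f) \<and>
     (\<forall>f g h. in_Jt f \<longrightarrow> in_Jt g \<longrightarrow> in_Jt h \<longrightarrow> br (f * g) h = f * br g h + g * br f h) \<and>
     (\<forall>f g h. in_Jt f \<longrightarrow> in_Jt g \<longrightarrow> in_Jt h \<longrightarrow> br h (f * g) = f * br h g + g * br h f) \<and>
     (\<forall>f g h. in_Jt f \<longrightarrow> in_Jt g \<longrightarrow> in_Jt h \<longrightarrow>
        br f (br g h) + br g (br h f) + br h (br f g) = 0)"

definition admissible :: "(jpoly \<Rightarrow> jpoly \<Rightarrow> jpoly) \<Rightarrow> bool" where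
  "admissible br \<longleftrightarrow>
     (\<forall>k l f g. f \<in> Mk k \<longrightarrow> g \<in> Mk l \<longrightarrow> br f g = RC1 k l f g) \<and>
     (\<forall>k l p q f g. f \<in> Jt k p \<longrightarrow> g \<in> Jt l q \<longrightarrow> br f g \<in> Jt (k + l + 2) (p + q))"

definition param_families ::
  "complex \<Rightarrow> complex \<Rightarrow> complex \<Rightarrow> complex \<Rightarrow> complex \<Rightarrow> complex \<Rightarrow> complex \<Rightarrow> complex
    \<Rightarrow> complex \<Rightarrow> complex \<Rightarrow> bool" where
  "param_families \<alpha> \<beta> \<gamma> \<delta> lam \<mu> \<theta> \<epsilon> \<xi> \<eta> \<longleftrightarrow>
    (\<gamma> \<noteq> 0 \<and> \<alpha> = \<epsilon> \<and> \<beta> = 3/2 * \<epsilon> + 1 \<and> \<delta> = \<gamma> \<and> lam = 4 / \<gamma> \<and> \<mu> = 8 / \<gamma> \<and>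
       \<theta> = 3/2 * \<epsilon> - 1 \<and> \<xi> = 4 * \<epsilon> / \<gamma> \<and> \<eta> = (-3/4 * \<epsilon> + 1/2) * \<gamma>) \<or>
    (\<alpha> = \<epsilon> + 2/3 \<and> \<beta> = 3/2 * \<epsilon> + 1 \<and> \<delta> = 3/2 * \<gamma> \<and> \<mu> = 3/2 * lam \<and> \<theta> = 3/2 * \<epsilon> \<and>
       \<xi> = (3/4 * \<epsilon> + 1/2) * lam \<and> \<eta> = -3/4 * \<epsilon> * \<gamma>) \<or>
    (\<alpha> = 4 \<and> \<beta> = 6 \<and> \<gamma> \<noteq> 0 \<and> \<delta> = -\<gamma> \<and> lam = 0 \<and> \<mu> = 0 \<and> \<theta> = 0 \<and> \<epsilon> = 0 \<and> \<xi> = 0 \<and> \<eta> = 0) \<or>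
    (\<alpha> = 0 \<and> \<beta> = 0 \<and> \<gamma> = 0 \<and> \<delta> = 0 \<and> lam \<noteq> 0 \<and> \<mu> = -2 * lam \<and> \<theta> = 6 \<and> \<epsilon> = 4 \<and>
       \<xi> = 0 \<and> \<eta> = 0) \<or>
    (\<alpha> = \<epsilon> \<and> \<beta> = 3/2 * \<epsilon> \<and> \<gamma> = 0 \<and> \<delta> = 0 \<and> lam = 0 \<and> \<mu> = 0 \<and> \<theta> = 3/2 * \<epsilon> \<and> \<xi> = 0) \<or>
    (\<alpha> \<noteq> \<epsilon> + 2/3 \<and> \<beta> = 3/2 * \<alpha> \<and> \<gamma> = 0 \<and> \<delta> = 0 \<and> lam = 0 \<and> \<mu> = 0 \<and> \<theta> = 3/2 * \<epsilon> \<and>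
       \<xi> = 0 \<and> \<eta> = 0)"

end

theory Submission
  imports Defs
begin


definition mon :: "nat \<Rightarrow> nat \<Rightarrow> nat \<Rightarrow> nat \<Rightarrow> mono" where
  "mon a b c d = Poly_Mapping.single 0 a + Poly_Mapping.single 1 b + Poly_Mapping.single 2 c + Poly_Mapping.single 3 d"

lemma lookup_mon: "Poly_Mapping.lookup (mon a b c d) i =
   (if i = 0 then a else if i = 1 then b else if i = 2 then c else if i = 3 then d else 0)"
  by (simp add: mon_def lookup_add lookup_single)

lemma mon_eq_iff: "mon a b c d = mon a' b' c' d' \<longleftrightarrow> a = a' \<and> b = b' \<and> c = c' \<and> d = d'"
proof
  assume h: "mon a b c d = mon a' b' c' d'"
  have "\<And>i. Poly_Mapping.lookup (mon a b c d) i = Poly_Mapping.lookup (mon a' b' c' d') i" using h by simp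
  from this[of 0] this[of 1] this[of 2] this[of 3] show "a = a' \<and> b = b' \<and> c = c' \<and> d = d'"
    by (simp add: lookup_mon)
qed simp

lemma mon_add: "mon a b c d + mon a' b' c' d' = mon (a+a') (b+b') (c+c') (d+d')"
  by (rule poly_mapping_eqI) (simp add: lookup_add lookup_mon)

lemma mon_zero: "mon 0 0 0 0 = 0"
  by (rule poly_mapping_eqI) (simp add: lookup_mon)

lemma keys_mon: "Poly_Mapping.keys (mon a b c d) \<subseteq> {0,1,2,3}"
  by (auto simp: in_keys_iff lookup_mon split: if_splits)

lemma mon_of_lookup:
  assumes "Poly_Mapping.keys m \<subseteq> {0,1,2,3}"
  shows "m = mon (Poly_Mapping.lookup m 0) (Poly_Mapping.lookup m 1) (Poly_Mapping.lookup m 2) (Poly_Mapping.lookup m 3)"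
proof (rule poly_mapping_eqI)
  fix i
  show "Poly_Mapping.lookup m i = Poly_Mapping.lookup (mon (Poly_Mapping.lookup m 0) (Poly_Mapping.lookup m 1) (Poly_Mapping.lookup m 2) (Poly_Mapping.lookup m 3)) i"
    using assms by (auto simp: lookup_mon in_keys_iff)
qed

definition T :: "complex \<Rightarrow> nat \<Rightarrow> nat \<Rightarrow> nat \<Rightarrow> nat \<Rightarrow> jpoly" where
  "T c a b d e = Poly_Mapping.single (mon a b d e) c"

lemma T_mult: "T c a b d e * T c' a' b' d' e' = T (c * c') (a+a') (b+b') (d+d') (e+e')"
  by (simp add: T_def mult_single mon_add)

lemma T_add: "T c a b d e + T c' a b d e = T (c + c') a b d e"
  by (simp add: T_def single_add)

lemma T_uminus: "- T c a b d e = T (- c) a b d e"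
  by (simp add: T_def single_uminus)

lemma T_zero: "T 0 a b d e = 0"
  by (simp add: T_def)

lemma lookup_T: "Poly_Mapping.lookup (T c a b d e) (mon a' b' d' e') = (if a = a' \<and> b = b' \<and> d = d' \<and> e = e' then c else 0)"
  by (simp add: T_def lookup_single mon_eq_iff)

lemma mon_singles: "mon 1 0 0 0 = Poly_Mapping.single 0 1" "mon 0 1 0 0 = Poly_Mapping.single 1 1"
  "mon 0 0 1 0 = Poly_Mapping.single 2 1" "mon 0 0 0 1 = Poly_Mapping.single 3 1"
  by (rule poly_mapping_eqI; simp add: lookup_mon lookup_single when_def)+

lemma Var_T: "E4 = T 1 1 0 0 0" "E6 = T 1 0 1 0 0" "JA = T 1 0 0 1 0" "JB = T 1 0 0 0 1"
  unfolding T_def Var_def mon_singles by simp_all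

lemma Cst_T: "Cst c = T c 0 0 0 0"
  by (simp add: T_def Cst_def mon_zero)




lemma sum_single_lookup: "(f :: 'a \<Rightarrow>\<^sub>0 'b::comm_monoid_add) = (\<Sum>m\<in>Poly_Mapping.keys f. Poly_Mapping.single m (Poly_Mapping.lookup f m))"
proof (rule poly_mapping_eqI)
  fix k
  have "Poly_Mapping.lookup (\<Sum>m\<in>Poly_Mapping.keys f. Poly_Mapping.single m (Poly_Mapping.lookup f m)) k
     = (\<Sum>m\<in>Poly_Mapping.keys f. if k = m then Poly_Mapping.lookup f m else 0)"
    by (simp add: lookup_sum lookup_single when_def eq_commute)
  also have "\<dots> = Poly_Mapping.lookup f k"
    by (simp add: sum.delta in_keys_iff)
  finally show "Poly_Mapping.lookup f k = Poly_Mapping.lookup (\<Sum>m\<in>Poly_Mapping.keys f. Poly_Mapping.single m (Poly_Mapping.lookup f m)) k" by simp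
qed

lemma keys_add_nat: "Poly_Mapping.keys ((a::mono) + b) = Poly_Mapping.keys a \<union> Poly_Mapping.keys b"
  by (auto simp: in_keys_iff lookup_add)

lemma in_Jt_add: "in_Jt f \<Longrightarrow> in_Jt g \<Longrightarrow> in_Jt (f + g)"
proof -
  assume a: "in_Jt f" "in_Jt g"
  show ?thesis unfolding in_Jt_def
  proof
    fix m assume "m \<in> Poly_Mapping.keys (f + g)"
    then have "m \<in> Poly_Mapping.keys f \<or> m \<in> Poly_Mapping.keys g" using keys_add[of f g] by blast
    then show "Poly_Mapping.keys m \<subseteq> {0,1,2,3}" using a unfolding in_Jt_def by blast
  qed
qed

lemma in_Jt_mult: "in_Jt f \<Longrightarrow> in_Jt g \<Longrightarrow> in_Jt (f * g)"
proof -
  assume a: "in_Jt f" "in_Jt g"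
  show ?thesis unfolding in_Jt_def
  proof
    fix m assume "m \<in> Poly_Mapping.keys (f * g)"
    then obtain x y where "m = x + y" "x \<in> Poly_Mapping.keys f" "y \<in> Poly_Mapping.keys g" using keys_mult[of f g] by blast
    then have "Poly_Mapping.keys m = Poly_Mapping.keys x \<union> Poly_Mapping.keys y" by (simp add: keys_add_nat)
    then show "Poly_Mapping.keys m \<subseteq> {0,1,2,3}" using a \<open>x \<in> _\<close> \<open>y \<in> _\<close> unfolding in_Jt_def by blast
  qed
qed

lemma in_Jt_uminus: "in_Jt f \<Longrightarrow> in_Jt (- f)"
proof -
  have "Poly_Mapping.keys (- f) = Poly_Mapping.keys f" by (auto simp: in_keys_iff)
  then show "in_Jt f \<Longrightarrow> in_Jt (- f)" unfolding in_Jt_def by simp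
qed

lemma in_Jt_zero: "in_Jt 0" unfolding in_Jt_def by simp

lemma in_Jt_single: "Poly_Mapping.keys m \<subseteq> {0,1,2,3} \<Longrightarrow> in_Jt (Poly_Mapping.single m c)"
  unfolding in_Jt_def by simp

lemma in_Jt_T: "in_Jt (T c a b d e)"
  unfolding T_def by (rule in_Jt_single[OF keys_mon])

lemma in_Jt_one: "in_Jt 1"
  using in_Jt_T[of 1 0 0 0 0] by (simp add: T_def mon_zero)

lemma in_Jt_Cst: "in_Jt (Cst c)" by (simp add: Cst_T in_Jt_T)

lemma in_Jt_Var: "in_Jt E4" "in_Jt E6" "in_Jt JA" "in_Jt JB"
  by (unfold Var_T) (rule in_Jt_T)+

lemma in_Jt_Var_gen: "i < 4 \<Longrightarrow> in_Jt (Var i)"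
  unfolding Var_def by (rule in_Jt_single) auto

lemma in_Jt_pow: "in_Jt f \<Longrightarrow> in_Jt (f ^ n)"
  by (induction n) (simp_all add: in_Jt_one in_Jt_mult)

lemma in_Jt_sum: "(\<And>x. x \<in> S \<Longrightarrow> in_Jt (F x)) \<Longrightarrow> in_Jt (sum F S)"
  by (induction S rule: infinite_finite_induct) (simp_all add: in_Jt_zero in_Jt_add)

lemma in_Jt_of_nat: "in_Jt (of_nat n)"
  using in_Jt_T[of "of_nat n" 0 0 0 0] by (simp add: T_def mon_zero)

lemma in_Jt_numeral: "in_Jt (numeral n)"
  using in_Jt_T[of "numeral n" 0 0 0 0] by (simp add: T_def mon_zero)

lemmas in_Jt_intros = in_Jt_add in_Jt_mult in_Jt_uminus in_Jt_zero in_Jt_T in_Jt_one in_Jt_Cst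
  in_Jt_Var in_Jt_Var_gen in_Jt_pow in_Jt_of_nat in_Jt_numeral

lemma of_nat_T: "(of_nat n :: jpoly) = T (of_nat n) 0 0 0 0"
  by (simp add: T_def mon_zero)

lemma numeral_T: "(numeral n :: jpoly) = T (numeral n) 0 0 0 0"
  by (simp add: T_def mon_zero)

lemma one_T: "(1 :: jpoly) = T 1 0 0 0 0"
  by (simp add: T_def mon_zero)

lemma Var_pow: "Var i ^ n = Poly_Mapping.single (Poly_Mapping.single i n) 1"
proof (induction n)
  case 0 then show ?case by simp
next
  case (Suc n)
  have "Poly_Mapping.single i (Suc n) = Poly_Mapping.single i 1 + Poly_Mapping.single i n"
    by (simp add: single_add[symmetric])
  then show ?case using Suc by (simp add: Var_def mult_single)
qed

definition pw :: "nat \<Rightarrow> nat \<Rightarrow> nat \<Rightarrow> nat \<Rightarrow> jpoly" where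
  "pw a b c d = E4 ^ a * E6 ^ b * JA ^ c * JB ^ d"

lemma pw_T: "pw a b c d = T 1 a b c d"
  by (simp add: pw_def Var_pow mult_single T_def mon_def)

lemma pderiv_single: "pderiv_var i (Poly_Mapping.single m c) =
    Poly_Mapping.single (m - Poly_Mapping.single i 1) (of_nat (Poly_Mapping.lookup m i) * c)"
  by (simp add: pderiv_var_def)

lemma pderiv_superset:
  assumes "finite S" "Poly_Mapping.keys p \<subseteq> S"
  shows "pderiv_var i p = (\<Sum>m\<in>S. Poly_Mapping.single (m - Poly_Mapping.single i 1) (of_nat (Poly_Mapping.lookup m i) * Poly_Mapping.lookup p m))"
  unfolding pderiv_var_def
  by (rule sum.mono_neutral_left) (use assms in \<open>auto simp: in_keys_iff\<close>)

lemma pderiv_add: "pderiv_var i (p + q) = pderiv_var i p + pderiv_var i q"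
proof -
  let ?S = "Poly_Mapping.keys p \<union> Poly_Mapping.keys q"
  have f: "finite ?S" by simp
  have k: "Poly_Mapping.keys (p+q) \<subseteq> ?S" by (rule keys_add)
  have kp: "Poly_Mapping.keys p \<subseteq> ?S" and kq: "Poly_Mapping.keys q \<subseteq> ?S" by auto
  show ?thesis
    unfolding pderiv_superset[OF f k] pderiv_superset[OF f kp] pderiv_superset[OF f kq]
    by (simp add: lookup_add distrib_left single_add sum.distrib)
qed

lemma pderiv_uminus: "pderiv_var i (- p) = - pderiv_var i p"
  unfolding pderiv_var_def by (simp add: keys_def single_uminus sum_negf)

lemma pderiv_zero: "pderiv_var i 0 = 0"
  unfolding pderiv_var_def by simp

lemma lookup_single0_mult: "Poly_Mapping.lookup (Poly_Mapping.single 0 c * (p::jpoly)) m = c * Poly_Mapping.lookup p m"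
  unfolding mult_map_scale_conv_mult[symmetric] by (simp add: map.rep_eq when_def)

lemma lookup_numeral_mult: "Poly_Mapping.lookup (numeral n * (p::jpoly)) m = numeral n * Poly_Mapping.lookup p m"
  using lookup_single0_mult[of "numeral n" p m] by simp

lemma mon_minus: "mon a b d e - Poly_Mapping.single 0 1 = mon (a - 1) b d e"
  "mon a b d e - Poly_Mapping.single 1 1 = mon a (b - 1) d e"
  "mon a b d e - Poly_Mapping.single 2 1 = mon a b (d - 1) e"
  "mon a b d e - Poly_Mapping.single 3 1 = mon a b d (e - 1)"
  by (rule poly_mapping_eqI; simp add: lookup_mon lookup_minus lookup_single when_def)+

lemma pderiv_T: "pderiv_var 0 (T c a b d e) = T (of_nat a * c) (a - 1) b d e"
  "pderiv_var 1 (T c a b d e) = T (of_nat b * c) a (b - 1) d e"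
  "pderiv_var 2 (T c a b d e) = T (of_nat d * c) a b (d - 1) e"
  "pderiv_var 3 (T c a b d e) = T (of_nat e * c) a b d (e - 1)"
  unfolding T_def pderiv_single mon_minus by (simp_all add: lookup_mon)

lemma pderiv_as_sum: "pderiv_var i f = (\<Sum>m\<in>Poly_Mapping.keys f. pderiv_var i (Poly_Mapping.single m (Poly_Mapping.lookup f m)))"
  unfolding pderiv_single by (simp add: pderiv_var_def)




lemma jpoly_eq_neg: "(x::jpoly) = - x \<Longrightarrow> x = 0"
proof (rule poly_mapping_eqI)
  fix k assume "x = - x"
  then have "Poly_Mapping.lookup x k = - Poly_Mapping.lookup x k" by (metis lookup_uminus)
  then show "Poly_Mapping.lookup x k = Poly_Mapping.lookup 0 k" by simp
qed

context fixes br :: "jpoly \<Rightarrow> jpoly \<Rightarrow> jpoly" assumes PB: "poisson_bracket br"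
begin

lemma br_in: "in_Jt f \<Longrightarrow> in_Jt g \<Longrightarrow> in_Jt (br f g)"
  using conjunct1[OF PB[unfolded poisson_bracket_def]] by blast
lemma br_skew: "in_Jt f \<Longrightarrow> in_Jt g \<Longrightarrow> br f g = - br g f"
  using conjunct1[OF conjunct2[OF PB[unfolded poisson_bracket_def]]] by blast
lemma br_addl: "in_Jt f \<Longrightarrow> in_Jt g \<Longrightarrow> in_Jt h \<Longrightarrow> br (f + g) h = br f h + br g h"
  using conjunct1[OF conjunct2[OF conjunct2[OF PB[unfolded poisson_bracket_def]]]] by blast
lemma br_cstl: "in_Jt f \<Longrightarrow> in_Jt h \<Longrightarrow> br (Cst c * f) h = Cst c * br f h"
  using conjunct1[OF conjunct2[OF conjunct2[OF conjunct2[OF conjunct2[OF PB[unfolded poisson_bracket_def]]]]]] by blast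
lemma br_multl: "in_Jt f \<Longrightarrow> in_Jt g \<Longrightarrow> in_Jt h \<Longrightarrow> br (f * g) h = f * br g h + g * br f h"
  using conjunct1[OF conjunct2[OF conjunct2[OF conjunct2[OF conjunct2[OF conjunct2[OF conjunct2[OF PB[unfolded poisson_bracket_def]]]]]]]] by blast
lemma br_jac: "in_Jt f \<Longrightarrow> in_Jt g \<Longrightarrow> in_Jt h \<Longrightarrow> br f (br g h) + br g (br h f) + br h (br f g) = 0"
  using conjunct2[OF conjunct2[OF conjunct2[OF conjunct2[OF conjunct2[OF conjunct2[OF conjunct2[OF conjunct2[OF PB[unfolded poisson_bracket_def]]]]]]]]] by blast

lemma br_self: "in_Jt f \<Longrightarrow> br f f = 0"
  using br_skew[of f f] jpoly_eq_neg by blast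

lemma br_zerol: "in_Jt h \<Longrightarrow> br 0 h = 0"
  using br_addl[of 0 0 h] in_Jt_zero by simp

lemma br_onel: "in_Jt h \<Longrightarrow> br 1 h = 0"
proof -
  assume h: "in_Jt h"
  have "br (1 * 1) h = 1 * br 1 h + 1 * br 1 h" using br_multl[OF in_Jt_one in_Jt_one h] .
  then show ?thesis by simp
qed

lemma br_Cstl: "in_Jt h \<Longrightarrow> br (Cst c) h = 0"
  using br_cstl[OF in_Jt_one, of h c] br_onel by simp

lemma br_suml: "finite S \<Longrightarrow> (\<And>x. x \<in> S \<Longrightarrow> in_Jt (F x)) \<Longrightarrow> in_Jt h \<Longrightarrow> br (sum F S) h = (\<Sum>x\<in>S. br (F x) h)"
proof (induction S rule: finite_induct)
  case empty then show ?case by (simp add: br_zerol)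
next
  case (insert x S)
  then show ?case by (simp add: br_addl in_Jt_sum)
qed

lemma br_powl: "in_Jt x \<Longrightarrow> in_Jt h \<Longrightarrow> br (x ^ n) h = of_nat n * x ^ (n - 1) * br x h"
proof (induction n)
  case 0 then show ?case by (simp add: br_onel)
next
  case (Suc n)
  have "br (x ^ Suc n) h = x * br (x ^ n) h + x ^ n * br x h"
    using br_multl[OF Suc.prems(1) in_Jt_pow[OF Suc.prems(1)] Suc.prems(2)] by simp
  also have "\<dots> = x * (of_nat n * x ^ (n - 1) * br x h) + x ^ n * br x h" using Suc by simp
  also have "\<dots> = of_nat (Suc n) * x ^ (Suc n - 1) * br x h"
  proof (cases n)
    case 0 then show ?thesis by simp
  next
    case (Suc k) then show ?thesis by (simp add: algebra_simps)
  qed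
  finally show ?case .
qed

lemma br_pw: "in_Jt h \<Longrightarrow> br (pw a b c d) h = of_nat a * pw (a-1) b c d * br E4 h + of_nat b * pw a (b-1) c d * br E6 h
   + of_nat c * pw a b (c-1) d * br JA h + of_nat d * pw a b c (d-1) * br JB h"
proof -
  assume h: "in_Jt h"
  note J = in_Jt_intros
  have 1: "br (E4^a * E6^b) h = E4^a * br (E6^b) h + E6^b * br (E4^a) h"
    by (rule br_multl) (simp_all add: J h)
  have 2: "br (E4^a * E6^b * JA^c) h = (E4^a * E6^b) * br (JA^c) h + JA^c * br (E4^a * E6^b) h"
    by (rule br_multl) (simp_all add: J h)
  have 3: "br (E4^a * E6^b * JA^c * JB^d) h = (E4^a * E6^b * JA^c) * br (JB^d) h + JB^d * br (E4^a * E6^b * JA^c) h"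
    by (rule br_multl) (simp_all add: J h)
  have p0: "br (E4^a) h = of_nat a * E4^(a-1) * br E4 h" by (rule br_powl) (simp_all add: J h)
  have p1: "br (E6^b) h = of_nat b * E6^(b-1) * br E6 h" by (rule br_powl) (simp_all add: J h)
  have p2: "br (JA^c) h = of_nat c * JA^(c-1) * br JA h" by (rule br_powl) (simp_all add: J h)
  have p3: "br (JB^d) h = of_nat d * JB^(d-1) * br JB h" by (rule br_powl) (simp_all add: J h)
  show ?thesis unfolding pw_def 3 2 1 p0 p1 p2 p3 by (simp only: algebra_simps)
qed

lemma br_single:
  assumes m: "Poly_Mapping.keys m \<subseteq> {0,1,2,3}" and h: "in_Jt h"
  shows "br (Poly_Mapping.single m c) h = pderiv_var 0 (Poly_Mapping.single m c) * br E4 h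
     + pderiv_var 1 (Poly_Mapping.single m c) * br E6 h + pderiv_var 2 (Poly_Mapping.single m c) * br JA h
     + pderiv_var 3 (Poly_Mapping.single m c) * br JB h"
proof -
  obtain a b cc d where md: "m = mon a b cc d" using mon_of_lookup[OF m] by blast
  have sm: "Poly_Mapping.single m c = T c a b cc d" by (simp add: md T_def)
  have s: "Poly_Mapping.single m c = Cst c * pw a b cc d" by (simp add: sm Cst_T pw_T T_mult)
  have "br (Poly_Mapping.single m c) h = Cst c * br (pw a b cc d) h"
    unfolding s by (rule br_cstl) (simp_all add: pw_T in_Jt_T h)
  also have "\<dots> = Cst c * (of_nat a * pw (a-1) b cc d) * br E4 h + Cst c * (of_nat b * pw a (b-1) cc d) * br E6 h
   + Cst c * (of_nat cc * pw a b (cc-1) d) * br JA h + Cst c * (of_nat d * pw a b cc (d-1)) * br JB h"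
    unfolding br_pw[OF h] by (simp only: algebra_simps)
  also have "\<dots> = pderiv_var 0 (Poly_Mapping.single m c) * br E4 h
     + pderiv_var 1 (Poly_Mapping.single m c) * br E6 h + pderiv_var 2 (Poly_Mapping.single m c) * br JA h
     + pderiv_var 3 (Poly_Mapping.single m c) * br JB h"
    unfolding sm pderiv_T by (simp add: Cst_T of_nat_T pw_T T_mult mult.commute)
  finally show ?thesis .
qed

lemma br_expand1:
  assumes f: "in_Jt f" and h: "in_Jt h"
  shows "br f h = pderiv_var 0 f * br E4 h + pderiv_var 1 f * br E6 h + pderiv_var 2 f * br JA h + pderiv_var 3 f * br JB h"
proof -
  define F where "F m = Poly_Mapping.single m (Poly_Mapping.lookup f m)" for m
  have km: "\<And>m. m \<in> Poly_Mapping.keys f \<Longrightarrow> Poly_Mapping.keys m \<subseteq> {0,1,2,3}"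
    using f unfolding in_Jt_def by blast
  have "br f h = br (\<Sum>m\<in>Poly_Mapping.keys f. F m) h"
    unfolding F_def by (subst sum_single_lookup[of f]) (rule refl)
  also have "\<dots> = (\<Sum>m\<in>Poly_Mapping.keys f. br (F m) h)"
    by (rule br_suml) (simp_all add: F_def h in_Jt_single[OF km])
  also have "\<dots> = (\<Sum>m\<in>Poly_Mapping.keys f. pderiv_var 0 (F m) * br E4 h
     + pderiv_var 1 (F m) * br E6 h + pderiv_var 2 (F m) * br JA h + pderiv_var 3 (F m) * br JB h)"
    unfolding F_def by (rule sum.cong[OF refl], rule br_single[OF km h], assumption)
  also have "\<dots> = pderiv_var 0 f * br E4 h + pderiv_var 1 f * br E6 h + pderiv_var 2 f * br JA h + pderiv_var 3 f * br JB h"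
    unfolding pderiv_as_sum[of _ f] F_def by (simp add: sum.distrib sum_distrib_right)
  finally show ?thesis .
qed

lemma br_expand2:
  assumes x: "in_Jt x" and g: "in_Jt g"
  shows "br x g = pderiv_var 0 g * br x E4 + pderiv_var 1 g * br x E6 + pderiv_var 2 g * br x JA + pderiv_var 3 g * br x JB"
proof -
  have "br x g = - br g x" by (rule br_skew[OF x g])
  also have "\<dots> = - (pderiv_var 0 g * br E4 x + pderiv_var 1 g * br E6 x + pderiv_var 2 g * br JA x + pderiv_var 3 g * br JB x)"
    by (simp add: br_expand1[OF g x])
  also have "\<dots> = pderiv_var 0 g * br x E4 + pderiv_var 1 g * br x E6 + pderiv_var 2 g * br x JA + pderiv_var 3 g * br x JB"
    using br_skew[OF x in_Jt_Var(1)] br_skew[OF x in_Jt_Var(2)] br_skew[OF x in_Jt_Var(3)] br_skew[OF x in_Jt_Var(4)]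
    by (simp add: algebra_simps)
  finally show ?thesis .
qed

end



context fixes br :: "jpoly \<Rightarrow> jpoly \<Rightarrow> jpoly" assumes PB: "poisson_bracket br"
begin

lemma br_addr: "in_Jt f \<Longrightarrow> in_Jt g \<Longrightarrow> in_Jt h \<Longrightarrow> br h (f + g) = br h f + br h g"
  using conjunct1[OF conjunct2[OF conjunct2[OF conjunct2[OF PB[unfolded poisson_bracket_def]]]]] by blast

lemma br_zeror: "in_Jt h \<Longrightarrow> br h 0 = 0"
  using br_addr[of 0 0 h] in_Jt_zero by simp

lemma br_negr: "in_Jt f \<Longrightarrow> in_Jt h \<Longrightarrow> br h (- f) = - br h f"
proof -
  assume f: "in_Jt f" and h: "in_Jt h"
  have "br h (- f + f) = br h (- f) + br h f" by (rule br_addr) (simp_all add: f h in_Jt_uminus)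
  then show ?thesis using br_zeror[OF h] by (simp add: eq_neg_iff_add_eq_0)
qed

lemma br_T: "in_Jt x \<Longrightarrow> br x (T c a b d e) = T (of_nat a * c) (a - 1) b d e * br x E4
   + T (of_nat b * c) a (b - 1) d e * br x E6 + T (of_nat d * c) a b (d - 1) e * br x JA
   + T (of_nat e * c) a b d (e - 1) * br x JB"
  using br_expand2[OF PB, of x "T c a b d e"] by (simp add: pderiv_T in_Jt_T del: One_nat_def)

lemma jac_lookup: "in_Jt x \<Longrightarrow> in_Jt y \<Longrightarrow> in_Jt z \<Longrightarrow>
   Poly_Mapping.lookup (br x (br y z) + br y (br z x) + br z (br x y)) m = 0"
  using br_jac[OF PB] by simp

lemma jac_eqs:
  assumes h01: "br E4 E6 = T (-2) 3 0 0 0 + T 2 0 2 0 0"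
    and h20: "br JA E4 = T al 0 1 1 0 + T ga 1 0 0 1"
    and h21: "br JA E6 = T be 2 0 1 0 + T de 0 1 0 1"
    and h30: "br JB E4 = T la 2 0 1 0 + T ep 0 1 0 1"
    and h31: "br JB E6 = T mu 1 1 1 0 + T th 2 0 0 1"
    and h23: "br JA JB = T xi 1 0 2 0 + T et 0 0 0 2"
  shows "2*de + be*ga - 4*ga - ga*th = 0" "2*de + de*ep - 2*ga - al*de = 0" "de*la - ga*mu - 6*al + 4*be = 0" "2*mu + la*th - 2*la - be*la = 0" "2*mu + al*mu - 4*la - mu*ep = 0" "ga*mu - de*la - 6*ep + 4*th = 0" "- al*xi + 2*al*la + ep*xi - al*mu = 0" "- 2*ga*xi - 2*la*et + ga*la + be*ep - al*th = 0" "- ep*et + de*ep - ga*ep + al*et = 0" "2*xi - be*xi + be*mu + th*xi - 2*be*la = 0" "- 2*xi + al*mu = 0" "- 2*de*xi - 2*mu*et + ga*mu + 2*al*th - 2*be*ep = 0" "- th*et + 2*ga*th - de*th + be*et = 0"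
proof -
  have s: "br E4 E4 = 0" "br E6 E6 = 0" "br JA JA = 0" "br JB JB = 0"
    by (rule br_self[OF PB in_Jt_Var(1)] br_self[OF PB in_Jt_Var(2)] br_self[OF PB in_Jt_Var(3)] br_self[OF PB in_Jt_Var(4)])+
  have r: "br E6 E4 = - br E4 E6" "br E4 JA = - br JA E4" "br E6 JA = - br JA E6"
     "br E4 JB = - br JB E4" "br E6 JB = - br JB E6" "br JB JA = - br JA JB"
    by (rule br_skew[OF PB in_Jt_Var(2) in_Jt_Var(1)] br_skew[OF PB in_Jt_Var(1) in_Jt_Var(3)]
      br_skew[OF PB in_Jt_Var(2) in_Jt_Var(3)] br_skew[OF PB in_Jt_Var(1) in_Jt_Var(4)]
      br_skew[OF PB in_Jt_Var(2) in_Jt_Var(4)] br_skew[OF PB in_Jt_Var(4) in_Jt_Var(3)])+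
  note V = s r[unfolded h01 h20 h21 h30 h31 h23] h01 h20 h21 h30 h31 h23
  have J0: "Poly_Mapping.lookup (br E4 (br E6 JA) + br E6 (br JA E4) + br JA (br E4 E6)) (mon 3 0 0 1) = 0"
    by (rule jac_lookup) (rule in_Jt_Var)+
  have E0: "2*de + be*ga - 4*ga - ga*th = 0" using J0 by (simp add: V br_addr br_negr br_T in_Jt_intros T_mult T_uminus lookup_add lookup_T distrib_left distrib_right lookup_numeral_mult algebra_simps del: One_nat_def)
  have J1: "Poly_Mapping.lookup (br E4 (br E6 JA) + br E6 (br JA E4) + br JA (br E4 E6)) (mon 0 2 0 1) = 0"
    by (rule jac_lookup) (rule in_Jt_Var)+
  have E1: "2*de + de*ep - 2*ga - al*de = 0" using J1 by (simp add: V br_addr br_negr br_T in_Jt_intros T_mult T_uminus lookup_add lookup_T distrib_left distrib_right lookup_numeral_mult algebra_simps del: One_nat_def)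
  have J2: "Poly_Mapping.lookup (br E4 (br E6 JA) + br E6 (br JA E4) + br JA (br E4 E6)) (mon 2 1 1 0) = 0"
    by (rule jac_lookup) (rule in_Jt_Var)+
  have E2: "de*la - ga*mu - 6*al + 4*be = 0" using J2 by (simp add: V br_addr br_negr br_T in_Jt_intros T_mult T_uminus lookup_add lookup_T distrib_left distrib_right lookup_numeral_mult algebra_simps del: One_nat_def)
  have J3: "Poly_Mapping.lookup (br E4 (br E6 JB) + br E6 (br JB E4) + br JB (br E4 E6)) (mon 4 0 1 0) = 0"
    by (rule jac_lookup) (rule in_Jt_Var)+
  have E3: "2*mu + la*th - 2*la - be*la = 0" using J3 by (simp add: V br_addr br_negr br_T in_Jt_intros T_mult T_uminus lookup_add lookup_T distrib_left distrib_right lookup_numeral_mult algebra_simps del: One_nat_def)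
  have J4: "Poly_Mapping.lookup (br E4 (br E6 JB) + br E6 (br JB E4) + br JB (br E4 E6)) (mon 1 2 1 0) = 0"
    by (rule jac_lookup) (rule in_Jt_Var)+
  have E4: "2*mu + al*mu - 4*la - mu*ep = 0" using J4 by (simp add: V br_addr br_negr br_T in_Jt_intros T_mult T_uminus lookup_add lookup_T distrib_left distrib_right lookup_numeral_mult algebra_simps del: One_nat_def)
  have J5: "Poly_Mapping.lookup (br E4 (br E6 JB) + br E6 (br JB E4) + br JB (br E4 E6)) (mon 2 1 0 1) = 0"
    by (rule jac_lookup) (rule in_Jt_Var)+
  have E5: "ga*mu - de*la - 6*ep + 4*th = 0" using J5 by (simp add: V br_addr br_negr br_T in_Jt_intros T_mult T_uminus lookup_add lookup_T distrib_left distrib_right lookup_numeral_mult algebra_simps del: One_nat_def)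
  have J6: "Poly_Mapping.lookup (br E4 (br JA JB) + br JA (br JB E4) + br JB (br E4 JA)) (mon 1 1 2 0) = 0"
    by (rule jac_lookup) (rule in_Jt_Var)+
  have E6: "- al*xi + 2*al*la + ep*xi - al*mu = 0" using J6 by (simp add: V br_addr br_negr br_T in_Jt_intros T_mult T_uminus lookup_add lookup_T distrib_left distrib_right lookup_numeral_mult algebra_simps del: One_nat_def)
  have J7: "Poly_Mapping.lookup (br E4 (br JA JB) + br JA (br JB E4) + br JB (br E4 JA)) (mon 2 0 1 1) = 0"
    by (rule jac_lookup) (rule in_Jt_Var)+
  have E7: "- 2*ga*xi - 2*la*et + ga*la + be*ep - al*th = 0" using J7 by (simp add: V br_addr br_negr br_T in_Jt_intros T_mult T_uminus lookup_add lookup_T distrib_left distrib_right lookup_numeral_mult algebra_simps del: One_nat_def)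
  have J8: "Poly_Mapping.lookup (br E4 (br JA JB) + br JA (br JB E4) + br JB (br E4 JA)) (mon 0 1 0 2) = 0"
    by (rule jac_lookup) (rule in_Jt_Var)+
  have E8: "- ep*et + de*ep - ga*ep + al*et = 0" using J8 by (simp add: V br_addr br_negr br_T in_Jt_intros T_mult T_uminus lookup_add lookup_T distrib_left distrib_right lookup_numeral_mult algebra_simps del: One_nat_def)
  have J9: "Poly_Mapping.lookup (br E6 (br JA JB) + br JA (br JB E6) + br JB (br E6 JA)) (mon 3 0 2 0) = 0"
    by (rule jac_lookup) (rule in_Jt_Var)+
  have E9: "2*xi - be*xi + be*mu + th*xi - 2*be*la = 0" using J9 by (simp add: V br_addr br_negr br_T in_Jt_intros T_mult T_uminus lookup_add lookup_T distrib_left distrib_right lookup_numeral_mult algebra_simps del: One_nat_def)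
  have J10: "Poly_Mapping.lookup (br E6 (br JA JB) + br JA (br JB E6) + br JB (br E6 JA)) (mon 0 2 2 0) = 0"
    by (rule jac_lookup) (rule in_Jt_Var)+
  have E10: "- 2*xi + al*mu = 0" using J10 by (simp add: V br_addr br_negr br_T in_Jt_intros T_mult T_uminus lookup_add lookup_T distrib_left distrib_right lookup_numeral_mult algebra_simps del: One_nat_def)
  have J11: "Poly_Mapping.lookup (br E6 (br JA JB) + br JA (br JB E6) + br JB (br E6 JA)) (mon 1 1 1 1) = 0"
    by (rule jac_lookup) (rule in_Jt_Var)+
  have E11: "- 2*de*xi - 2*mu*et + ga*mu + 2*al*th - 2*be*ep = 0" using J11 by (simp add: V br_addr br_negr br_T in_Jt_intros T_mult T_uminus lookup_add lookup_T distrib_left distrib_right lookup_numeral_mult algebra_simps del: One_nat_def)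
  have J12: "Poly_Mapping.lookup (br E6 (br JA JB) + br JA (br JB E6) + br JB (br E6 JA)) (mon 2 0 0 2) = 0"
    by (rule jac_lookup) (rule in_Jt_Var)+
  have E12: "- th*et + 2*ga*th - de*th + be*et = 0" using J12 by (simp add: V br_addr br_negr br_T in_Jt_intros T_mult T_uminus lookup_add lookup_T distrib_left distrib_right lookup_numeral_mult algebra_simps del: One_nat_def)
  show "2*de + be*ga - 4*ga - ga*th = 0" "2*de + de*ep - 2*ga - al*de = 0" "de*la - ga*mu - 6*al + 4*be = 0" "2*mu + la*th - 2*la - be*la = 0" "2*mu + al*mu - 4*la - mu*ep = 0" "ga*mu - de*la - 6*ep + 4*th = 0" "- al*xi + 2*al*la + ep*xi - al*mu = 0" "- 2*ga*xi - 2*la*et + ga*la + be*ep - al*th = 0" "- ep*et + de*ep - ga*ep + al*et = 0" "2*xi - be*xi + be*mu + th*xi - 2*be*la = 0" "- 2*xi + al*mu = 0" "- 2*de*xi - 2*mu*et + ga*mu + 2*al*th - 2*be*ep = 0" "- th*et + 2*ga*th - de*th + be*et = 0"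
    by (fact E0 E1 E2 E3 E4 E5 E6 E7 E8 E9 E10 E11 E12)+
qed

end



lemma lc1: "a = b \<Longrightarrow> (x - y) = p*(a - b) \<Longrightarrow> x = (y::complex)" by simp

lemma lc2: "a = b \<Longrightarrow> c = d \<Longrightarrow> (x - y) = p*(a - b) + q*(c - d) \<Longrightarrow> x = (y::complex)" by simp

lemma solve_params:
  fixes al be ga de la mu th ep xi et :: complex
  assumes e0: "2*de + be*ga - 4*ga - ga*th = 0" and e1: "2*de + de*ep - 2*ga - al*de = 0"
   and e2: "de*la - ga*mu - 6*al + 4*be = 0" and e3: "2*mu + la*th - 2*la - be*la = 0"
   and e4: "2*mu + al*mu - 4*la - mu*ep = 0" and e5: "ga*mu - de*la - 6*ep + 4*th = 0"
   and e6: "- al*xi + 2*al*la + ep*xi - al*mu = 0" and e7: "- 2*ga*xi - 2*la*et + ga*la + be*ep - al*th = 0"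
   and e8: "- ep*et + de*ep - ga*ep + al*et = 0" and e9: "2*xi - be*xi + be*mu + th*xi - 2*be*la = 0"
   and e10: "- 2*xi + al*mu = 0" and e11: "- 2*de*xi - 2*mu*et + ga*mu + 2*al*th - 2*be*ep = 0"
   and e12: "- th*et + 2*ga*th - de*th + be*et = 0"
  shows "param_families al be ga de la mu th ep xi et"
proof -
  define K where "K = ga*mu - de*la"
  define D where "D = al - ep"
  have beK: "be = (6*al + K)/4" using e2 unfolding K_def by algebra
  have thK: "th = (6*ep - K)/4" using e5 unfolding K_def by algebra
  have xi: "xi = al*mu/2" using e10 by algebra
  show ?thesis
  proof (cases "ga = 0")
    case ga: True
    have de: "de = 0" using e0 ga by algebra
    have K0: "K = 0" unfolding K_def using ga de by simp
    have be: "be = 3/2*al" using beK K0 by algebra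
    have th: "th = 3/2*ep" using thK K0 by algebra
    show ?thesis
    proof (cases "la = 0")
      case la: True
      have mu: "mu = 0" using e3 la by algebra
      have xi0: "xi = 0" using xi mu by algebra
      have "(al - ep) * et = 0" using e8 ga de by algebra
      then have "al = ep \<or> et = 0" by simp
      then show ?thesis
      proof
        assume "al = ep"
        then show ?thesis unfolding param_families_def using ga de la mu be th xi0 by simp
      next
        assume et: "et = 0"
        show ?thesis
        proof (cases "al = ep + 2/3")
          case True
          then show ?thesis unfolding param_families_def using ga de la mu be th xi0 et by (simp add: algebra_simps)
        next
          case False
          then show ?thesis unfolding param_families_def using ga de la mu be th xi0 et by simp
        qed
      qed
    next
      case la: False
      have m1: "2*mu = la*(2 + 3/2*D)" using e3 be th unfolding D_def by algebra
      have m2: "mu*(2 + D) = 4*la" using e4 unfolding D_def by algebra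
      have "la * ((3*D - 2)*(D + 4)) = 0"
      proof -
        have "2*(mu*(2+D)) = la*(2 + 3/2*D)*(2+D)" using m1 by algebra
        then have "8*la = la*(2 + 3/2*D)*(2+D)" using m2 by simp
        then show ?thesis by algebra
      qed
      then have "(3*D - 2)*(D + 4) = 0" using la by simp
      then have "3*D - 2 = 0 \<or> D + 4 = 0" by simp
      then have "D = 2/3 \<or> D = -4"
      proof
        assume "3*D - 2 = 0" then have "D = 2/3" by algebra then show ?thesis ..
      next
        assume "D + 4 = 0" then have "D = -4" by algebra then show ?thesis ..
      qed
      then show ?thesis
      proof
        assume D: "D = -4"
        have mu: "mu = -2*la" using m1 D by algebra
        have "la * al = 0" using e9 xi mu be th D unfolding D_def by algebra
        then have al: "al = 0" using la by simp
        have ep: "ep = 4" using D al unfolding D_def by algebra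
        have et: "et = 0" using e7 ga al be ep la by algebra
        show ?thesis unfolding param_families_def using ga de la mu be th xi al ep et by simp
      next
        assume D: "D = 2/3"
        have mu: "mu = 3/2*la" using m1 D by algebra
        have et: "et = 0" using e7 ga be th la by algebra
        have al: "al = ep + 2/3" using D unfolding D_def by algebra
        show ?thesis unfolding param_families_def
          apply (insert ga de mu be th xi al et)
          apply (rule disjI2, rule disjI1)
          apply (intro conjI)
          apply (assumption | algebra)+
          done
      qed
    qed
  next
    case ga: False
    show ?thesis
    proof (cases "la = 0")
      case la: True
      have mu: "mu = 0" using e3 la by algebra
      have K0: "K = 0" unfolding K_def using la mu by simp
      have be: "be = 3/2*al" using beK K0 by algebra
      have th: "th = 3/2*ep" using thK K0 by algebra
      have xi0: "xi = 0" using xi mu by algebra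
      have d1: "2*de = ga*(4 - 3/2*D)" using e0 be th unfolding D_def by algebra
      have d2: "de*(2 - D) = 2*ga" using e1 unfolding D_def by algebra
      have "ga * ((3*D - 2)*(D - 4)) = 0"
      proof -
        have "2*(de*(2-D)) = ga*(4 - 3/2*D)*(2-D)" using d1 by algebra
        then have "4*ga = ga*(4 - 3/2*D)*(2-D)" using d2 by simp
        then show ?thesis by algebra
      qed
      then have "(3*D - 2)*(D - 4) = 0" using ga by simp
      then have "3*D - 2 = 0 \<or> D - 4 = 0" by simp
      then have "D = 2/3 \<or> D = 4"
      proof
        assume "3*D - 2 = 0" then have "D = 2/3" by algebra then show ?thesis ..
      next
        assume "D - 4 = 0" then have "D = 4" by algebra then show ?thesis ..
      qed
      then show ?thesis
      proof
        assume D: "D = 4"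
        have de: "de = -ga" using d1 D by algebra
        have a1: "4*et = 2*ga*ep" using e8 de D unfolding D_def by algebra
        have a2: "6*et + 9/2*ga*ep = 0" using e12 de be th D unfolding D_def by algebra
        have "ga*ep = 0" using a1 a2 by algebra
        then have ep: "ep = 0" using ga by simp
        have et: "et = 0" using a1 ep by algebra
        have al: "al = 4" using D ep unfolding D_def by simp
        show ?thesis unfolding param_families_def using ga la mu be th xi0 al ep et de by simp
      next
        assume D: "D = 2/3"
        have de: "de = 3/2*ga" using d1 D by algebra
        have et: "et = -3/4*ep*ga" using e8 de D unfolding D_def by algebra
        have al: "al = ep + 2/3" using D unfolding D_def by algebra
        show ?thesis unfolding param_families_def
          apply (insert la mu be th xi0 al et de)
          apply (rule disjI2, rule disjI1)
          apply (intro conjI)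
          apply (assumption | algebra)+
          done
      qed
    next
      case la: False
      define s where "s = 3/2*D + K/2"
      have bth: "be - th = s" unfolding beK thK s_def D_def by (simp add: field_simps)
      have d1: "2*de = ga*(4 - s)" using e0 unfolding bth[symmetric] by algebra
      have m1: "2*mu = la*(2 + s)" using e3 unfolding bth[symmetric] by algebra
      have d2: "de*(2 - D) = 2*ga" using e1 unfolding D_def by algebra
      have m2: "mu*(2 + D) = 4*la" using e4 unfolding D_def by algebra
      have q1: "(4 - s)*(2 - D) = 4"
      proof -
        have "ga*((4 - s)*(2 - D)) = ga * 4" using d1 d2 by algebra
        then show ?thesis using ga by simp
      qed
      have q2: "(2 + s)*(2 + D) = 8"
      proof -
        have "la*((2 + s)*(2 + D)) = la * 8" using m1 m2 by algebra
        then show ?thesis using la by simp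
      qed
      have sD: "2*s = 4 - 3*D"
        by (rule lc2[OF q1 q2, where p="-1/2" and q="1/2"]) (simp add: algebra_simps)
      have "D * (2 - 3*D) = 0"
        by (rule lc2[OF q1 sD, where p=2 and q="2 - D"]) (simp add: algebra_simps)
      then have "D = 0 \<or> 2 - 3*D = 0" by simp
      then have D: "D = 0 \<or> 3*D = 2"
      proof
        assume "2 - 3*D = 0" then have "3*D = 2" by simp then show ?thesis ..
      qed simp
      have KK: "K = ga*la*(s - 1)"
      proof -
        have "2*K = ga*(2*mu) - (2*de)*la" unfolding K_def by (simp add: algebra_simps)
        also have "\<dots> = ga*la*(2*s - 2)" unfolding d1 m1 by (simp add: algebra_simps)
        also have "\<dots> = 2*(ga*la*(s - 1))" by (simp add: algebra_simps)
        finally show ?thesis by simp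
      qed
      have sK: "2*s = 3*D + K" unfolding s_def by (simp add: field_simps)
      from D show ?thesis
      proof
        assume D0: "D = 0"
        have s2: "s = 2" using sD D0 by simp
        have K4: "K = 4" using sK s2 D0 by simp
        have gl: "ga*la = 4" using KK K4 s2 by simp
        have de: "de = ga" using d1 s2 by simp
        have mu: "mu = 2*la" using m1 s2 by simp
        have al: "al = ep" using D0 unfolding D_def by simp
        have be: "be = 3/2*ep + 1" unfolding beK K4 al by (simp add: field_simps)
        have th: "th = 3/2*ep - 1" unfolding thK K4 by (simp add: field_simps)
        have et: "et = (-3/4*ep + 1/2)*ga"
        proof -
          have h0: "et*(be - th) + th*(2*ga - de) = 0" using e12 by (simp add: algebra_simps)
          have b1: "be - th = 2" unfolding be th by simp
          have b2: "2*ga - de = ga" unfolding de by simp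
          have h1: "et*2 + th*ga = 0" using h0 unfolding b1 b2 .
          have "et = - (th*ga)/2" by (rule lc1[OF h1, where p="1/2"]) (simp add: field_simps)
          then show ?thesis unfolding th by (simp add: field_simps)
        qed
        have la: "la = 4/ga" using gl ga by (simp add: field_simps)
        have mu2: "mu = 8/ga" using mu la by simp
        have xi2: "xi = 4*ep/ga" using xi mu2 al by simp
        show ?thesis unfolding param_families_def
          apply (insert ga al be de la mu2 th xi2 et)
          apply (rule disjI1)
          apply (intro conjI)
          apply (assumption | simp)+
          done
      next
        assume D3: "3*D = 2"
        have s1: "s = 1" using sD D3 by simp
        have K0: "K = 0" using sK s1 D3 by simp
        have de: "de = 3/2*ga" using d1 s1 by (simp add: field_simps)
        have mu: "mu = 3/2*la" using m1 s1 by (simp add: field_simps)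
        have al: "al = ep + 2/3" using D3 unfolding D_def by (simp add: field_simps)
        have be: "be = 3/2*ep + 1" unfolding beK K0 al by (simp add: field_simps)
        have th: "th = 3/2*ep" unfolding thK K0 by (simp add: field_simps)
        have xi2: "xi = (3/4*ep + 1/2)*la" unfolding xi mu al by (simp add: field_simps)
        have et: "et = -3/4*ep*ga"
        proof -
          have h0: "D*et + ep*(de - ga) = 0" using e8 unfolding D_def by (simp add: algebra_simps)
          have b1: "D = 2/3" using D3 by (simp add: field_simps)
          have b2: "de - ga = ga/2" unfolding de by (simp add: field_simps)
          have h1: "2/3*et + ep*(ga/2) = 0" using h0 unfolding b1 b2 .
          show ?thesis by (rule lc1[OF h1, where p="3/2"]) (simp add: field_simps)
        qed
        show ?thesis unfolding param_families_def
          apply (insert al be de mu th xi2 et)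
          apply (rule disjI2, rule disjI1)
          apply (intro conjI)
          apply (assumption | simp)+
          done
      qed
    qed
  qed
qed




lemma mweight_mon: "mweight (mon a b d e) = 4 * int a + 6 * int b - 2 * int d"
  by (simp add: mweight_def lookup_mon)

lemma mindex_mon: "mindex (mon a b d e) = d + e"
  by (simp add: mindex_def lookup_mon)

lemma T_in_Jt: "T c a b d e \<in> Jt (4 * int a + 6 * int b - 2 * int d) (d + e)"
  unfolding Jt_def T_def using keys_mon[of a b d e] by (simp add: mweight_mon mindex_mon)

lemma T_in_Mk: "T c a b 0 0 \<in> Mk (4 * int a + 6 * int b)"
proof -
  have "Poly_Mapping.keys (mon a b 0 0) \<subseteq> {0,1}"
    by (auto simp: in_keys_iff lookup_mon split: if_splits)
  then show ?thesis unfolding Mk_def T_def by (simp add: mweight_mon)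
qed

lemma Jt_keys: "f \<in> Jt k p \<Longrightarrow> m \<in> Poly_Mapping.keys f \<Longrightarrow>
   \<exists>a b c d. m = mon a b c d \<and> 4 * int a + 6 * int b - 2 * int c = k \<and> c + d = p"
proof -
  assume f: "f \<in> Jt k p" and m: "m \<in> Poly_Mapping.keys f"
  have km: "Poly_Mapping.keys m \<subseteq> {0,1,2,3}" and w: "mweight m = k" and i: "mindex m = p"
    using f m unfolding Jt_def by auto
  have "m = mon (Poly_Mapping.lookup m 0) (Poly_Mapping.lookup m 1) (Poly_Mapping.lookup m 2) (Poly_Mapping.lookup m 3)"
    by (rule mon_of_lookup[OF km])
  then show ?thesis using w i unfolding mweight_def mindex_def by blast
qed

lemma two_terms:
  assumes "Poly_Mapping.keys (f::jpoly) \<subseteq> {m1, m2}" "m1 \<noteq> m2"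
  shows "f = Poly_Mapping.single m1 (Poly_Mapping.lookup f m1) + Poly_Mapping.single m2 (Poly_Mapping.lookup f m2)"
proof -
  have "f = (\<Sum>m\<in>Poly_Mapping.keys f. Poly_Mapping.single m (Poly_Mapping.lookup f m))" by (rule sum_single_lookup)
  also have "\<dots> = (\<Sum>m\<in>{m1,m2}. Poly_Mapping.single m (Poly_Mapping.lookup f m))"
    by (rule sum.mono_neutral_left) (use assms in \<open>auto simp: in_keys_iff\<close>)
  also have "\<dots> = Poly_Mapping.single m1 (Poly_Mapping.lookup f m1) + Poly_Mapping.single m2 (Poly_Mapping.lookup f m2)"
    using assms(2) by simp
  finally show ?thesis .
qed

lemma Jt_form:
  assumes f: "f \<in> Jt k p"
    and enum: "\<And>a b c d. 4 * int a + 6 * int b - 2 * int c = k \<Longrightarrow> c + d = p \<Longrightarrow>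
        (a = a1 \<and> b = b1 \<and> c = c1 \<and> d = d1) \<or> (a = a2 \<and> b = b2 \<and> c = c2 \<and> d = d2)"
    and ne: "\<not> (a1 = a2 \<and> b1 = b2 \<and> c1 = c2 \<and> d1 = d2)"
  shows "f = T (Poly_Mapping.lookup f (mon a1 b1 c1 d1)) a1 b1 c1 d1 + T (Poly_Mapping.lookup f (mon a2 b2 c2 d2)) a2 b2 c2 d2"
proof -
  have "Poly_Mapping.keys f \<subseteq> {mon a1 b1 c1 d1, mon a2 b2 c2 d2}"
  proof
    fix m assume "m \<in> Poly_Mapping.keys f"
    then obtain a b c d where "m = mon a b c d" "4 * int a + 6 * int b - 2 * int c = k" "c + d = p"
      using Jt_keys[OF f] by blast
    then show "m \<in> {mon a1 b1 c1 d1, mon a2 b2 c2 d2}" using enum by auto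
  qed
  moreover have "mon a1 b1 c1 d1 \<noteq> mon a2 b2 c2 d2" using ne by (simp add: mon_eq_iff)
  ultimately show ?thesis unfolding T_def by (rule two_terms)
qed

lemma of_int_T: "(of_int k :: jpoly) = T (of_int k) 0 0 0 0"
  by (simp add: T_def mon_zero)

lemma stmt_forms:
  "- 2 * E4 ^ 3 + 2 * E6 ^ 2 = T (-2) 3 0 0 0 + T 2 0 2 0 0"
  "Cst al * E6 * JA + Cst ga * E4 * JB = T al 0 1 1 0 + T ga 1 0 0 1"
  "Cst be * E4 ^ 2 * JA + Cst de * E6 * JB = T be 2 0 1 0 + T de 0 1 0 1"
  "Cst la * E4 ^ 2 * JA + Cst ep * E6 * JB = T la 2 0 1 0 + T ep 0 1 0 1"
  "Cst mu * E4 * E6 * JA + Cst th * E4 ^ 2 * JB = T mu 1 1 1 0 + T th 2 0 0 1"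
  "Cst xi * E4 * JA ^ 2 + Cst et * JB ^ 2 = T xi 1 0 2 0 + T et 0 0 0 2"
  unfolding Var_T Cst_T power2_eq_square power3_eq_cube numeral_T
  by (simp_all add: T_mult T_uminus numeral_2_eq_2[symmetric] del: One_nat_def)

lemma RC1_gen: "RC1 4 6 E4 E6 = T (-2) 3 0 0 0 + T 2 0 2 0 0"
  unfolding RC1_def serre_def Var_T Cst_T power2_eq_square of_int_T
  by (simp add: pderiv_T T_mult T_zero T_uminus diff_conv_add_uminus del: One_nat_def)




lemma Var_Jt: "E4 \<in> Jt 4 0" "E6 \<in> Jt 6 0" "JA \<in> Jt (-2) 1" "JB \<in> Jt 0 1"
  unfolding Var_T using T_in_Jt[of 1 1 0 0 0] T_in_Jt[of 1 0 1 0 0] T_in_Jt[of 1 0 0 1 0] T_in_Jt[of 1 0 0 0 1]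
  by simp_all

lemma Var_Mk: "E4 \<in> Mk 4" "E6 \<in> Mk 6"
  unfolding Var_T using T_in_Mk[of 1 1 0] T_in_Mk[of 1 0 1] by simp_all

lemma forward:
  assumes PB: "poisson_bracket br" and adm: "admissible br"
  shows "\<exists>\<alpha> \<beta> \<gamma> \<delta> lam \<mu> \<theta> \<epsilon> \<xi> \<eta>. param_families \<alpha> \<beta> \<gamma> \<delta> lam \<mu> \<theta> \<epsilon> \<xi> \<eta> \<and>
       br E4 E6 = - 2 * E4 ^ 3 + 2 * E6 ^ 2 \<and>
       br JA E4 = Cst \<alpha> * E6 * JA + Cst \<gamma> * E4 * JB \<and>
       br JA E6 = Cst \<beta> * E4 ^ 2 * JA + Cst \<delta> * E6 * JB \<and>
       br JB E4 = Cst lam * E4 ^ 2 * JA + Cst \<epsilon> * E6 * JB \<and>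
       br JB E6 = Cst \<mu> * E4 * E6 * JA + Cst \<theta> * E4 ^ 2 * JB \<and>
       br JA JB = Cst \<xi> * E4 * JA ^ 2 + Cst \<eta> * JB ^ 2"
proof -
  have A1: "\<And>k l f g. f \<in> Mk k \<Longrightarrow> g \<in> Mk l \<Longrightarrow> br f g = RC1 k l f g"
    using adm unfolding admissible_def by blast
  have A2: "\<And>k l p q f g. f \<in> Jt k p \<Longrightarrow> g \<in> Jt l q \<Longrightarrow> br f g \<in> Jt (k + l + 2) (p + q)"
    using adm unfolding admissible_def by blast
  have h01: "br E4 E6 = T (-2) 3 0 0 0 + T 2 0 2 0 0"
    using A1[OF Var_Mk(1) Var_Mk(2)] RC1_gen by simp
  have j20: "br JA E4 \<in> Jt 4 1" using A2[OF Var_Jt(3) Var_Jt(1)] by simp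
  have j21: "br JA E6 \<in> Jt 6 1" using A2[OF Var_Jt(3) Var_Jt(2)] by simp
  have j30: "br JB E4 \<in> Jt 6 1" using A2[OF Var_Jt(4) Var_Jt(1)] by simp
  have j31: "br JB E6 \<in> Jt 8 1" using A2[OF Var_Jt(4) Var_Jt(2)] by simp
  have j23: "br JA JB \<in> Jt 0 2" using A2[OF Var_Jt(3) Var_Jt(4)] by (simp add: numeral_2_eq_2[symmetric] del: One_nat_def)
  define al where "al = Poly_Mapping.lookup (br JA E4) (mon 0 1 1 0)"
  define ga where "ga = Poly_Mapping.lookup (br JA E4) (mon 1 0 0 1)"
  define be where "be = Poly_Mapping.lookup (br JA E6) (mon 2 0 1 0)"
  define de where "de = Poly_Mapping.lookup (br JA E6) (mon 0 1 0 1)"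
  define la where "la = Poly_Mapping.lookup (br JB E4) (mon 2 0 1 0)"
  define ep where "ep = Poly_Mapping.lookup (br JB E4) (mon 0 1 0 1)"
  define mu where "mu = Poly_Mapping.lookup (br JB E6) (mon 1 1 1 0)"
  define th where "th = Poly_Mapping.lookup (br JB E6) (mon 2 0 0 1)"
  define xi where "xi = Poly_Mapping.lookup (br JA JB) (mon 1 0 2 0)"
  define et where "et = Poly_Mapping.lookup (br JA JB) (mon 0 0 0 2)"
  have h20: "br JA E4 = T al 0 1 1 0 + T ga 1 0 0 1"
    unfolding al_def ga_def by (rule Jt_form[OF j20]) presburger+
  have h21: "br JA E6 = T be 2 0 1 0 + T de 0 1 0 1"
    unfolding be_def de_def by (rule Jt_form[OF j21]) presburger+
  have h30: "br JB E4 = T la 2 0 1 0 + T ep 0 1 0 1"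
    unfolding la_def ep_def by (rule Jt_form[OF j30]) presburger+
  have h31: "br JB E6 = T mu 1 1 1 0 + T th 2 0 0 1"
    unfolding mu_def th_def by (rule Jt_form[OF j31]) presburger+
  have h23: "br JA JB = T xi 1 0 2 0 + T et 0 0 0 2"
    unfolding xi_def et_def by (rule Jt_form[OF j23]) presburger+
  note eqs = jac_eqs[OF PB h01 h20 h21 h30 h31 h23]
  have pf: "param_families al be ga de la mu th ep xi et"
    by (rule solve_params[OF eqs])
  show ?thesis
    by (rule exI[of _ al], rule exI[of _ be], rule exI[of _ ga], rule exI[of _ de], rule exI[of _ la],
        rule exI[of _ mu], rule exI[of _ th], rule exI[of _ ep], rule exI[of _ xi], rule exI[of _ et])
       (unfold stmt_forms, intro conjI pf h01 h20 h21 h30 h31 h23)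
qed




lemma Jt_zero: "0 \<in> Jt k p" unfolding Jt_def by simp

lemma Jt_add: "f \<in> Jt k p \<Longrightarrow> g \<in> Jt k p \<Longrightarrow> f + g \<in> Jt k p"
  unfolding Jt_def using keys_add[of f g] by blast

lemma Jt_uminus: "f \<in> Jt k p \<Longrightarrow> - f \<in> Jt k p"
proof -
  have "Poly_Mapping.keys (- f) = Poly_Mapping.keys f" by (auto simp: in_keys_iff)
  then show "f \<in> Jt k p \<Longrightarrow> - f \<in> Jt k p" unfolding Jt_def by simp
qed

lemma Jt_sum: "(\<And>x. x \<in> S \<Longrightarrow> F x \<in> Jt k p) \<Longrightarrow> sum F S \<in> Jt k p"
  by (induction S rule: infinite_finite_induct) (simp_all add: Jt_zero Jt_add)

lemma mweight_add: "mweight (x + y) = mweight x + mweight y"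
  by (simp add: mweight_def lookup_add algebra_simps)

lemma mindex_add: "mindex (x + y) = mindex x + mindex y"
  by (simp add: mindex_def lookup_add algebra_simps)

lemma Jt_mult: "f \<in> Jt a b \<Longrightarrow> g \<in> Jt c d \<Longrightarrow> f * g \<in> Jt (a + c) (b + d)"
proof -
  assume f: "f \<in> Jt a b" and g: "g \<in> Jt c d"
  show ?thesis unfolding Jt_def mem_Collect_eq
  proof
    fix m assume "m \<in> Poly_Mapping.keys (f * g)"
    then obtain x y where xy: "m = x + y" "x \<in> Poly_Mapping.keys f" "y \<in> Poly_Mapping.keys g"
      using keys_mult[of f g] by blast
    have "Poly_Mapping.keys x \<subseteq> {0,1,2,3}" "mweight x = a" "mindex x = b"
      using f xy(2) unfolding Jt_def by auto
    moreover have "Poly_Mapping.keys y \<subseteq> {0,1,2,3}" "mweight y = c" "mindex y = d"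
      using g xy(3) unfolding Jt_def by auto
    ultimately show "Poly_Mapping.keys m \<subseteq> {0,1,2,3} \<and> mweight m = a + c \<and> mindex m = b + d"
      unfolding xy(1) keys_add_nat mweight_add mindex_add by blast
  qed
qed

lemma Jt_single: "Poly_Mapping.keys m \<subseteq> {0,1,2,3} \<Longrightarrow> Poly_Mapping.single m c \<in> Jt (mweight m) (mindex m)"
  unfolding Jt_def by simp

definition wt :: "nat \<Rightarrow> int" where
  "wt i = (if i = 0 then 4 else if i = 1 then 6 else if i = 2 then -2 else 0)"
definition ix :: "nat \<Rightarrow> nat" where
  "ix i = (if i = 2 \<or> i = 3 then 1 else 0)"

lemma minus_e:
  assumes "i < 4" "Poly_Mapping.lookup m i \<noteq> 0"
  shows "mweight m = mweight (m - Poly_Mapping.single i 1) + wt i"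
    "mindex m = mindex (m - Poly_Mapping.single i 1) + ix i"
    "Poly_Mapping.keys (m - Poly_Mapping.single i 1) \<subseteq> Poly_Mapping.keys m"
proof -
  have c: "i = 0 \<or> i = 1 \<or> i = 2 \<or> i = 3" using assms(1) by auto
  show "mweight m = mweight (m - Poly_Mapping.single i 1) + wt i"
    using c assms(2) by (auto simp: mweight_def wt_def lookup_minus lookup_single)
  show "mindex m = mindex (m - Poly_Mapping.single i 1) + ix i"
    using c assms(2) by (auto simp: mindex_def ix_def lookup_minus lookup_single)
  show "Poly_Mapping.keys (m - Poly_Mapping.single i 1) \<subseteq> Poly_Mapping.keys m"
    by (auto simp: in_keys_iff lookup_minus)
qed

lemma pd_mult:
  assumes f: "f \<in> Jt k p" and h: "h \<in> Jt L Q" and i: "i < 4" and L: "L = l + wt i" and Q: "Q = q + ix i"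
  shows "pderiv_var i f * h \<in> Jt (k + l) (p + q)"
proof -
  have "pderiv_var i f * h = (\<Sum>m\<in>Poly_Mapping.keys f.
      Poly_Mapping.single (m - Poly_Mapping.single i 1) (of_nat (Poly_Mapping.lookup m i) * Poly_Mapping.lookup f m) * h)"
    unfolding pderiv_var_def by (simp add: sum_distrib_right)
  also have "\<dots> \<in> Jt (k + l) (p + q)"
  proof (rule Jt_sum)
    fix m assume m: "m \<in> Poly_Mapping.keys f"
    have km: "Poly_Mapping.keys m \<subseteq> {0,1,2,3}" and w: "mweight m = k" and x: "mindex m = p"
      using f m unfolding Jt_def by auto
    show "Poly_Mapping.single (m - Poly_Mapping.single i 1) (of_nat (Poly_Mapping.lookup m i) * Poly_Mapping.lookup f m) * h \<in> Jt (k + l) (p + q)"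
    proof (cases "Poly_Mapping.lookup m i = 0")
      case True then show ?thesis by (simp add: Jt_zero)
    next
      case False
      note e = minus_e[OF i False]
      have "Poly_Mapping.single (m - Poly_Mapping.single i 1) (of_nat (Poly_Mapping.lookup m i) * Poly_Mapping.lookup f m) * h
         \<in> Jt (mweight (m - Poly_Mapping.single i 1) + L) (mindex (m - Poly_Mapping.single i 1) + Q)"
        by (rule Jt_mult[OF Jt_single h]) (use e(3) km in blast)
      moreover have "mweight (m - Poly_Mapping.single i 1) + L = k + l" using e(1) w L by simp
      moreover have "mindex (m - Poly_Mapping.single i 1) + Q = p + q" using e(2) x Q by simp
      ultimately show ?thesis by simp
    qed
  qed
  finally show ?thesis .
qed

lemma T_in_Jt': "k = 4 * int a + 6 * int b - 2 * int d \<Longrightarrow> p = d + e \<Longrightarrow> T c a b d e \<in> Jt k p"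
  using T_in_Jt by simp




lemma Mk_mon: "f \<in> Mk k \<Longrightarrow> m \<in> Poly_Mapping.keys f \<Longrightarrow>
   m = mon (Poly_Mapping.lookup m 0) (Poly_Mapping.lookup m 1) 0 0 \<and> mweight m = k \<and> Poly_Mapping.lookup m 2 = 0 \<and> Poly_Mapping.lookup m 3 = 0"
proof -
  assume f: "f \<in> Mk k" and m: "m \<in> Poly_Mapping.keys f"
  have k: "Poly_Mapping.keys m \<subseteq> {0,1}" and w: "mweight m = k" using f m unfolding Mk_def by auto
  have l2: "Poly_Mapping.lookup m 2 = 0" and l3: "Poly_Mapping.lookup m 3 = 0" using k by (auto simp: in_keys_iff)
  have "m = mon (Poly_Mapping.lookup m 0) (Poly_Mapping.lookup m 1) (Poly_Mapping.lookup m 2) (Poly_Mapping.lookup m 3)"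
    by (rule mon_of_lookup) (use k in auto)
  then show ?thesis using l2 l3 w by simp
qed

lemma Mk_in_Jt: "f \<in> Mk k \<Longrightarrow> in_Jt f"
  unfolding Mk_def in_Jt_def by auto

lemma Mk_pd23: "f \<in> Mk k \<Longrightarrow> pderiv_var 2 f = 0" "f \<in> Mk k \<Longrightarrow> pderiv_var 3 f = 0"
  unfolding pderiv_var_def by (rule sum.neutral, use Mk_mon in auto)+

lemma euler_T: "4 * E4 * pderiv_var 0 (T c a b 0 0) + 6 * E6 * pderiv_var 1 (T c a b 0 0)
   = T ((4 * of_nat a + 6 * of_nat b) * c) a b 0 0"
proof -
  have 1: "4 * E4 * T (of_nat a * c) (a - 1) b 0 0 = T (4 * of_nat a * c) a b 0 0"
    unfolding Var_T numeral_T by (cases a) (simp_all add: T_mult T_zero algebra_simps)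
  have 2: "6 * E6 * T (of_nat b * c) a (b - 1) 0 0 = T (6 * of_nat b * c) a b 0 0"
    unfolding Var_T numeral_T by (cases b) (simp_all add: T_mult T_zero algebra_simps)
  show ?thesis unfolding pderiv_T 1 2 T_add by (simp add: algebra_simps)
qed

lemma euler:
  assumes f: "f \<in> Mk k"
  shows "of_int k * f = 4 * E4 * pderiv_var 0 f + 6 * E6 * pderiv_var 1 f"
proof -
  have "of_int k * f = of_int k * (\<Sum>m\<in>Poly_Mapping.keys f. Poly_Mapping.single m (Poly_Mapping.lookup f m))"
    by (subst sum_single_lookup[of f]) (rule refl)
  also have "\<dots> = (\<Sum>m\<in>Poly_Mapping.keys f. 4 * E4 * pderiv_var 0 (Poly_Mapping.single m (Poly_Mapping.lookup f m))
       + 6 * E6 * pderiv_var 1 (Poly_Mapping.single m (Poly_Mapping.lookup f m)))"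
    unfolding sum_distrib_left
  proof (rule sum.cong[OF refl])
    fix m assume m: "m \<in> Poly_Mapping.keys f"
    define a where "a = Poly_Mapping.lookup m 0"
    define b where "b = Poly_Mapping.lookup m 1"
    have mm: "m = mon a b 0 0" and w: "mweight m = k" using Mk_mon[OF f m] unfolding a_def b_def by auto
    have k: "k = 4 * int a + 6 * int b" using w unfolding mm mweight_mon by simp
    have s: "Poly_Mapping.single m (Poly_Mapping.lookup f m) = T (Poly_Mapping.lookup f m) a b 0 0"
      unfolding T_def mm ..
    show "of_int k * Poly_Mapping.single m (Poly_Mapping.lookup f m) =
       4 * E4 * pderiv_var 0 (Poly_Mapping.single m (Poly_Mapping.lookup f m)) +
       6 * E6 * pderiv_var 1 (Poly_Mapping.single m (Poly_Mapping.lookup f m))"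
      unfolding s euler_T of_int_T T_mult k by simp
  qed
  also have "\<dots> = 4 * E4 * pderiv_var 0 f + 6 * E6 * pderiv_var 1 f"
    unfolding pderiv_as_sum[of _ f] by (simp add: sum.distrib sum_distrib_left)
  finally show ?thesis .
qed

lemma rc_ident:
  fixes u v :: "'a::comm_ring_1"
  assumes "3*u = -1" "2*v = -1"
  shows "(f0 * g1 - f1 * g0) * (- 2 * E ^ 3 + 2 * F ^ 2) =
    (4*E*f0 + 6*F*f1) * (g0 * u * F + g1 * v * E^2) - (4*E*g0 + 6*F*g1) * (f0 * u * F + f1 * v * E^2)"
proof -
  have "(4*E*f0 + 6*F*f1) * (g0 * u * F + g1 * v * E^2) - (4*E*g0 + 6*F*g1) * (f0 * u * F + f1 * v * E^2)
      = (f0 * g1 - f1 * g0) * (2 * (2*v) * E^3 - 2 * (3*u) * F^2)"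
    by (simp add: algebra_simps power2_eq_square power3_eq_cube)
  then show ?thesis using assms by simp
qed




lemma sum4: "(\<Sum>i<(4::nat). F i) = F 0 + F 1 + F 2 + F 3"
  by (simp add: eval_nat_numeral add.assoc)

lemma Jt_in_Jt: "f \<in> Jt k p \<Longrightarrow> in_Jt f"
  unfolding Jt_def in_Jt_def by auto

context fixes br :: "jpoly \<Rightarrow> jpoly \<Rightarrow> jpoly" assumes PB: "poisson_bracket br"
begin

lemma br_full: "in_Jt f \<Longrightarrow> in_Jt g \<Longrightarrow>
  br f g = (\<Sum>i<4. pderiv_var i f * (\<Sum>j<4. pderiv_var j g * br (Var i) (Var j)))"
  unfolding sum4
  using br_expand1[OF PB, of f g] br_expand2[OF PB in_Jt_Var(1), of g] br_expand2[OF PB in_Jt_Var(2), of g]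
    br_expand2[OF PB in_Jt_Var(3), of g] br_expand2[OF PB in_Jt_Var(4), of g]
  by simp

lemma backward:
  assumes h01: "br E4 E6 = T (-2) 3 0 0 0 + T 2 0 2 0 0"
    and h20: "br JA E4 = T al 0 1 1 0 + T ga 1 0 0 1"
    and h21: "br JA E6 = T be 2 0 1 0 + T de 0 1 0 1"
    and h30: "br JB E4 = T la 2 0 1 0 + T ep 0 1 0 1"
    and h31: "br JB E6 = T mu 1 1 1 0 + T th 2 0 0 1"
    and h23: "br JA JB = T xi 1 0 2 0 + T et 0 0 0 2"
  shows "admissible br"
proof -
  have s: "br E4 E4 = 0" "br E6 E6 = 0" "br JA JA = 0" "br JB JB = 0"
    by (rule br_self[OF PB in_Jt_Var(1)] br_self[OF PB in_Jt_Var(2)] br_self[OF PB in_Jt_Var(3)] br_self[OF PB in_Jt_Var(4)])+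
  have r: "br E6 E4 = - br E4 E6" "br E4 JA = - br JA E4" "br E6 JA = - br JA E6"
     "br E4 JB = - br JB E4" "br E6 JB = - br JB E6" "br JB JA = - br JA JB"
    by (rule br_skew[OF PB in_Jt_Var(2) in_Jt_Var(1)] br_skew[OF PB in_Jt_Var(1) in_Jt_Var(3)]
      br_skew[OF PB in_Jt_Var(2) in_Jt_Var(3)] br_skew[OF PB in_Jt_Var(1) in_Jt_Var(4)]
      br_skew[OF PB in_Jt_Var(2) in_Jt_Var(4)] br_skew[OF PB in_Jt_Var(4) in_Jt_Var(3)])+
  have F: "br (Var 0) (Var 0) \<in> Jt (wt 0 + wt 0 + 2) (ix 0 + ix 0)"
    "br (Var 1) (Var 1) \<in> Jt (wt 1 + wt 1 + 2) (ix 1 + ix 1)"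
    "br (Var 2) (Var 2) \<in> Jt (wt 2 + wt 2 + 2) (ix 2 + ix 2)"
    "br (Var 3) (Var 3) \<in> Jt (wt 3 + wt 3 + 2) (ix 3 + ix 3)"
    unfolding s by (rule Jt_zero)+
  have G: "br (Var 0) (Var 1) \<in> Jt (wt 0 + wt 1 + 2) (ix 0 + ix 1)"
    "br (Var 2) (Var 0) \<in> Jt (wt 2 + wt 0 + 2) (ix 2 + ix 0)"
    "br (Var 2) (Var 1) \<in> Jt (wt 2 + wt 1 + 2) (ix 2 + ix 1)"
    "br (Var 3) (Var 0) \<in> Jt (wt 3 + wt 0 + 2) (ix 3 + ix 0)"
    "br (Var 3) (Var 1) \<in> Jt (wt 3 + wt 1 + 2) (ix 3 + ix 1)"
    "br (Var 2) (Var 3) \<in> Jt (wt 2 + wt 3 + 2) (ix 2 + ix 3)"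
    unfolding h01 h20 h21 h30 h31 h23 by (intro Jt_add T_in_Jt'; simp add: wt_def ix_def)+
  have H: "br (Var 1) (Var 0) \<in> Jt (wt 1 + wt 0 + 2) (ix 1 + ix 0)"
    "br (Var 0) (Var 2) \<in> Jt (wt 0 + wt 2 + 2) (ix 0 + ix 2)"
    "br (Var 1) (Var 2) \<in> Jt (wt 1 + wt 2 + 2) (ix 1 + ix 2)"
    "br (Var 0) (Var 3) \<in> Jt (wt 0 + wt 3 + 2) (ix 0 + ix 3)"
    "br (Var 1) (Var 3) \<in> Jt (wt 1 + wt 3 + 2) (ix 1 + ix 3)"
    "br (Var 3) (Var 2) \<in> Jt (wt 3 + wt 2 + 2) (ix 3 + ix 2)"
    unfolding r using G by (simp_all only: add.commute Jt_uminus)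
  have P: "\<And>i j. i < 4 \<Longrightarrow> j < 4 \<Longrightarrow> br (Var i) (Var j) \<in> Jt (wt i + wt j + 2) (ix i + ix j)"
  proof -
    fix i j :: nat assume "i < 4" "j < 4"
    then have ij: "i = 0 \<or> i = 1 \<or> i = 2 \<or> i = 3" "j = 0 \<or> j = 1 \<or> j = 2 \<or> j = 3" by auto
    show "br (Var i) (Var j) \<in> Jt (wt i + wt j + 2) (ix i + ix j)"
      apply (insert ij)
      apply (elim disjE)
      apply (simp_all only: F G H)
      done
  qed
  show ?thesis unfolding admissible_def
  proof (intro conjI allI impI)
    fix k l p q f g assume f: "f \<in> Jt k p" and g: "g \<in> Jt l q"
    have "br f g = (\<Sum>i<4. pderiv_var i f * (\<Sum>j<4. pderiv_var j g * br (Var i) (Var j)))"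
      by (rule br_full[OF Jt_in_Jt[OF f] Jt_in_Jt[OF g]])
    also have "\<dots> \<in> Jt (k + (l + 2)) (p + q)"
    proof (rule Jt_sum)
      fix i assume i: "i \<in> {..<4::nat}"
      have "(\<Sum>j<4. pderiv_var j g * br (Var i) (Var j)) \<in> Jt (l + (wt i + 2)) (q + ix i)"
      proof (rule Jt_sum)
        fix j assume j: "j \<in> {..<4::nat}"
        show "pderiv_var j g * br (Var i) (Var j) \<in> Jt (l + (wt i + 2)) (q + ix i)"
          by (rule pd_mult[OF g P]) (use i j in auto)
      qed
      then show "pderiv_var i f * (\<Sum>j<4. pderiv_var j g * br (Var i) (Var j)) \<in> Jt (k + (l + 2)) (p + q)"
        by (rule pd_mult[OF f]) (use i in auto)
    qed
    finally show "br f g \<in> Jt (k + l + 2) (p + q)" by (simp add: add.assoc)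
  next
    fix k l f g assume f: "f \<in> Mk k" and g: "g \<in> Mk l"
    define P where "P = - 2 * E4 ^ 3 + 2 * E6 ^ 2"
    have P01: "br E4 E6 = P" unfolding P_def h01 stmt_forms(1) ..
    have "br f g = (\<Sum>i<4. pderiv_var i f * (\<Sum>j<4. pderiv_var j g * br (Var i) (Var j)))"
      by (rule br_full[OF Mk_in_Jt[OF f] Mk_in_Jt[OF g]])
    also have "\<dots> = pderiv_var 0 f * (pderiv_var 1 g * P) - pderiv_var 1 f * (pderiv_var 0 g * P)"
      unfolding sum4 Mk_pd23[OF f] Mk_pd23[OF g] s r(1) P01 by (simp add: algebra_simps)
    also have "\<dots> = (pderiv_var 0 f * pderiv_var 1 g - pderiv_var 1 f * pderiv_var 0 g) * P"
      by (simp add: algebra_simps)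
    also have "\<dots> = RC1 k l f g"
    proof -
      have u: "3 * Cst (-1/3) = (-1::jpoly)" unfolding Cst_T numeral_T one_T T_uminus by (simp add: T_mult)
      have v: "2 * Cst (-1/2) = (-1::jpoly)" unfolding Cst_T numeral_T one_T T_uminus by (simp add: T_mult)
      show ?thesis unfolding RC1_def serre_def euler[OF f] euler[OF g] P_def
        by (rule rc_ident[OF u v])
    qed
    finally show "br f g = RC1 k l f g" .
  qed
qed

end


theorem mainTheorem7:
  fixes br :: "jpoly \<Rightarrow> jpoly \<Rightarrow> jpoly"
  assumes "poisson_bracket br"
  shows "admissible br \<longleftrightarrow>
    (\<exists>\<alpha> \<beta> \<gamma> \<delta> lam \<mu> \<theta> \<epsilon> \<xi> \<eta>. param_families \<alpha> \<beta> \<gamma> \<delta> lam \<mu> \<theta> \<epsilon> \<xi> \<eta> \<and>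
       br E4 E6 = - 2 * E4 ^ 3 + 2 * E6 ^ 2 \<and>
       br JA E4 = Cst \<alpha> * E6 * JA + Cst \<gamma> * E4 * JB \<and>
       br JA E6 = Cst \<beta> * E4 ^ 2 * JA + Cst \<delta> * E6 * JB \<and>
       br JB E4 = Cst lam * E4 ^ 2 * JA + Cst \<epsilon> * E6 * JB \<and>
       br JB E6 = Cst \<mu> * E4 * E6 * JA + Cst \<theta> * E4 ^ 2 * JB \<and>
       br JA JB = Cst \<xi> * E4 * JA ^ 2 + Cst \<eta> * JB ^ 2)"
proof
  assume "admissible br"
  then show "\<exists>\<alpha> \<beta> \<gamma> \<delta> lam \<mu> \<theta> \<epsilon> \<xi> \<eta>. param_families \<alpha> \<beta> \<gamma> \<delta> lam \<mu> \<theta> \<epsilon> \<xi> \<eta> \<and>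
       br E4 E6 = - 2 * E4 ^ 3 + 2 * E6 ^ 2 \<and>
       br JA E4 = Cst \<alpha> * E6 * JA + Cst \<gamma> * E4 * JB \<and>
       br JA E6 = Cst \<beta> * E4 ^ 2 * JA + Cst \<delta> * E6 * JB \<and>
       br JB E4 = Cst lam * E4 ^ 2 * JA + Cst \<epsilon> * E6 * JB \<and>
       br JB E6 = Cst \<mu> * E4 * E6 * JA + Cst \<theta> * E4 ^ 2 * JB \<and>
       br JA JB = Cst \<xi> * E4 * JA ^ 2 + Cst \<eta> * JB ^ 2"
    by (rule forward[OF assms])
next
  assume "\<exists>\<alpha> \<beta> \<gamma> \<delta> lam \<mu> \<theta> \<epsilon> \<xi> \<eta>. param_families \<alpha> \<beta> \<gamma> \<delta> lam \<mu> \<theta> \<epsilon> \<xi> \<eta> \<and>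
       br E4 E6 = - 2 * E4 ^ 3 + 2 * E6 ^ 2 \<and>
       br JA E4 = Cst \<alpha> * E6 * JA + Cst \<gamma> * E4 * JB \<and>
       br JA E6 = Cst \<beta> * E4 ^ 2 * JA + Cst \<delta> * E6 * JB \<and>
       br JB E4 = Cst lam * E4 ^ 2 * JA + Cst \<epsilon> * E6 * JB \<and>
       br JB E6 = Cst \<mu> * E4 * E6 * JA + Cst \<theta> * E4 ^ 2 * JB \<and>
       br JA JB = Cst \<xi> * E4 * JA ^ 2 + Cst \<eta> * JB ^ 2"
  then obtain al be ga de la mu th ep xi et where
    h: "br E4 E6 = - 2 * E4 ^ 3 + 2 * E6 ^ 2"
       "br JA E4 = Cst al * E6 * JA + Cst ga * E4 * JB"
       "br JA E6 = Cst be * E4 ^ 2 * JA + Cst de * E6 * JB"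
       "br JB E4 = Cst la * E4 ^ 2 * JA + Cst ep * E6 * JB"
       "br JB E6 = Cst mu * E4 * E6 * JA + Cst th * E4 ^ 2 * JB"
       "br JA JB = Cst xi * E4 * JA ^ 2 + Cst et * JB ^ 2"
    by blast
  show "admissible br"
    by (rule backward[OF assms h[unfolded stmt_forms]])
qed

end
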